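(* Let $\alpha\in[0,\frac12)$ and $\epsilon\in(0,\infty)$. There exists $C_{\alpha,\epsilon}(T)\in(0,\infty)$ such that for all $M\in\mathbb N$, all $x\in H_M$, all $h\in H_M\setminus\{0\}$ and all $0\le s<t\le T$, almost surely, \[\frac{\|\Pi_M(t,s)h\|_{L^2}}{\|(-A)^{-\alpha}h\|_{L^2}}\le\frac{C_{\alpha,\epsilon}(T)}{(t-s)^\alpha}\exp\Bigl(\epsilon\int_s^t\|\nabla X_M^x(r)\|_{L^2}^2dr\Bigr)\Bigl(\sup_{r\in[s,t]}\|X_M^x(r)\|_{L^\infty}+1\Bigr).\]
   Context: $T\in(0,\infty)$ fixed. $L^2=L^2(0,1)$ (real); $\nabla$ is the derivative on $(0,1)$. With $h_k=\sqrt2\sin(k\pi\cdot)$, $A$ is the Dirichlet Laplacian $Ax=-\sum_k(\pi k)^2\langle x,h_k\rangle_{L^2}h_k$ and $(-A)^{-\alpha}x=\sum_k(\pi k)^{-2\alpha}\langle x,h_k\rangle_{L^2}h_k$. $H_M=\mathrm{span}(h_1,\dots,h_M)$, $P_M$ the orthogonal projection onto $H_M$. $B[x_1,x_2]=x_1\nabla x_2+x_2\nabla x_1$, $B_M[x_1,x_2]=P_MB[P_Mx_1,P_Mx_2]$, $B_M(x)=B_M[x,x]$. $Q$ is a positive self-adjoint trace-class operator on $L^2$ with eigenbasis $(e_k)$, eigenvalues $(q_k)$; $W^Q(t)=\sum_k\sqrt{q_k}W^{(k)}(t)e_k$ with independent standard Brownian motions $W^{(k)}$. For $x\in H_M$,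 $X_M^x$ is the unique $H_M$-valued continuous adapted process with $X_M^x(t)=x+\int_0^t[AX_M^x(r)+B_M(X_M^x(r))]dr+P_MW^Q(t)$. For $s\ge0$ and $h\in H_M$, $\eta_M^h(\cdot|s)$ is the (pathwise) solution on $[s,\infty)$ of $\frac{d}{dt}\eta_M^h(t|s)=A\eta_M^h(t|s)+2B_M[X_M^x(t),\eta_M^h(t|s)]$, $\eta_M^h(s|s)=h$, and $\Pi_M(t,s)h=\eta_M^h(t|s)$ (a random linear operator on $H_M$). *)

theory Defs
  imports "HOL-Probability.Probability"
begin

definition L2_fun :: "(real \<Rightarrow> real) \<Rightarrow> bool" where
  "L2_fun f \<longleftrightarrow> f \<in> borel_measurable lborel \<and> set_integrable lborel {0..1} (\<lambda>\<xi>. (f \<xi>)\<^sup>2)"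

definition L2_inner :: "(real \<Rightarrow> real) \<Rightarrow> (real \<Rightarrow> real) \<Rightarrow> real" where
  "L2_inner f g = (LINT \<xi>:{0..1}|lborel. f \<xi> * g \<xi>)"

definition L2_norm :: "(real \<Rightarrow> real) \<Rightarrow> real" where
  "L2_norm f = sqrt (LINT \<xi>:{0..1}|lborel. (f \<xi>)\<^sup>2)"

definition Linf_norm :: "(real \<Rightarrow> real) \<Rightarrow> real" where
  "Linf_norm f = (SUP \<xi>\<in>{0<..<1}. \<bar>f \<xi>\<bar>)"
  \<comment> \<open>used only for continuous functions (elements of H_M), where ess sup = sup\<close>

definition L2_ONB :: "(nat \<Rightarrow> real \<Rightarrow> real) \<Rightarrow> bool" where
  "L2_ONB e \<longleftrightarrow> (\<forall>k. L2_fun (e k))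
     \<and> (\<forall>i j. L2_inner (e i) (e j) = (if i = j then 1 else 0))
     \<and> (\<forall>f. L2_fun f \<and> (\<forall>k. L2_inner f (e k) = 0) \<longrightarrow> (AE \<xi> in lborel. \<xi> \<in> {0..1} \<longrightarrow> f \<xi> = 0))"

definition hb :: "nat \<Rightarrow> real \<Rightarrow> real" where
  "hb k \<xi> = sqrt 2 * sin (real k * pi * \<xi>)"

text \<open>An element of H_M is represented by its coefficients c k, k = 1..M, w.r.t. hb;
  all other coefficients are zero.\<close>
definition in_HM :: "nat \<Rightarrow> (nat \<Rightarrow> real) \<Rightarrow> bool" where
  "in_HM M c \<longleftrightarrow> (\<forall>k. k \<notin> {1..M} \<longrightarrow> c k = 0)"

definition fn :: "nat \<Rightarrow> (nat \<Rightarrow> real) \<Rightarrow> real \<Rightarrow> real" where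
  "fn M c \<xi> = (\<Sum>k=1..M. c k * hb k \<xi>)"

text \<open>Coefficients of (-A)^(-alpha) c.\<close>
definition negA_pow :: "real \<Rightarrow> (nat \<Rightarrow> real) \<Rightarrow> nat \<Rightarrow> real" where
  "negA_pow \<alpha> c k = (pi * real k) powr (-2 * \<alpha>) * c k"

text \<open>Coefficients of B_M[c,d] = P_M (u v' + v u') with u, v the functions of c, d.\<close>
definition BM :: "nat \<Rightarrow> (nat \<Rightarrow> real) \<Rightarrow> (nat \<Rightarrow> real) \<Rightarrow> nat \<Rightarrow> real" where
  "BM M c d j = (if j \<in> {1..M} then
     integral {0..1} (\<lambda>\<xi>. (fn M c \<xi> * deriv (fn M d) \<xi> + fn M d \<xi> * deriv (fn M c) \<xi>) * hb j \<xi>)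
   else 0)"

definition std_BM :: "'a measure \<Rightarrow> (real \<Rightarrow> 'a \<Rightarrow> real) \<Rightarrow> bool" where
  "std_BM P B \<longleftrightarrow>
     (\<forall>t\<ge>0. B t \<in> borel_measurable P)
   \<and> (\<forall>\<omega>\<in>space P. B 0 \<omega> = 0 \<and> continuous_on {0..} (\<lambda>t. B t \<omega>))
   \<and> (\<forall>s t. 0 \<le> s \<and> s < t \<longrightarrow>
        distributed P lborel (\<lambda>\<omega>. B t \<omega> - B s \<omega>) (\<lambda>x. ennreal (normal_density 0 (sqrt (t - s)) x)))
   \<and> (\<forall>n (\<tau>::nat \<Rightarrow> real). 0 \<le> \<tau> 0 \<and> (\<forall>i<n. \<tau> i < \<tau> (Suc i)) \<longrightarrow>
        prob_space.indep_vars P (\<lambda>_. borel) (\<lambda>i \<omega>. B (\<tau> (Suc i)) \<omega> - B (\<tau> i) \<omega>) {..<n})"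

definition indep_BMs :: "'a measure \<Rightarrow> (nat \<Rightarrow> real \<Rightarrow> 'a \<Rightarrow> real) \<Rightarrow> bool" where
  "indep_BMs P W \<longleftrightarrow> prob_space P \<and> (\<forall>k. std_BM P (W k))
     \<and> prob_space.indep_vars P (\<lambda>_. Pi\<^sub>M {0..} (\<lambda>_. borel)) (\<lambda>k \<omega>. \<lambda>t\<in>{0..}. W k t \<omega>) UNIV"

text \<open>Coefficient j of P_M W^Q(t) at \<omega>, W^Q = sum_k sqrt(q k) W k e k.\<close>
definition PMWQ :: "nat \<Rightarrow> (nat \<Rightarrow> real) \<Rightarrow> (nat \<Rightarrow> real \<Rightarrow> real) \<Rightarrow> (nat \<Rightarrow> real \<Rightarrow> 'a \<Rightarrow> real)
                      \<Rightarrow> real \<Rightarrow> 'a \<Rightarrow> nat \<Rightarrow> real" where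
  "PMWQ M q e W t \<omega> j = (if j \<in> {1..M} then
     (\<Sum>k. sqrt (q k) * W k t \<omega> * L2_inner (e k) (hb j)) else 0)"

text \<open>X (real time, sample point, coefficient) is an H_M-valued continuous process solving
  X(t) = x + int_0^t [A X(r) + B_M(X(r))] dr + P_M W^Q(t).\<close>
definition is_XM :: "'a measure \<Rightarrow> nat \<Rightarrow> (nat \<Rightarrow> real) \<Rightarrow> (nat \<Rightarrow> real) \<Rightarrow> (nat \<Rightarrow> real \<Rightarrow> real)
                      \<Rightarrow> (nat \<Rightarrow> real \<Rightarrow> 'a \<Rightarrow> real) \<Rightarrow> (real \<Rightarrow> 'a \<Rightarrow> nat \<Rightarrow> real) \<Rightarrow> bool" where
  "is_XM P M x q e W X \<longleftrightarrow>
     (\<forall>t \<omega>. in_HM M (X t \<omega>))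
   \<and> (\<forall>\<omega>\<in>space P. \<forall>k. continuous_on {0..} (\<lambda>t. X t \<omega> k))
   \<and> (\<forall>t\<ge>0. \<forall>k. (\<lambda>\<omega>. X t \<omega> k) \<in> borel_measurable P)
   \<and> (AE \<omega> in P. \<forall>t\<ge>0. \<forall>k\<in>{1..M}.
        X t \<omega> k = x k + integral {0..t} (\<lambda>r. - (pi * real k)\<^sup>2 * X r \<omega> k + BM M (X r \<omega>) (X r \<omega>) k)
                   + PMWQ M q e W t \<omega> k)"

text \<open>eta is the solution on [s,\<infinity>) of eta' = A eta + 2 B_M[Y(t), eta], eta(s) = h, for a given path Y.\<close>
definition is_eta :: "nat \<Rightarrow> (real \<Rightarrow> nat \<Rightarrow> real) \<Rightarrow> real \<Rightarrow> (nat \<Rightarrow> real) \<Rightarrow> (real \<Rightarrow> nat \<Rightarrow> real) \<Rightarrow> bool" where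
  "is_eta M Y s h \<eta> \<longleftrightarrow>
     \<eta> s = h \<and> (\<forall>t. in_HM M (\<eta> t))
   \<and> (\<forall>t\<ge>s. \<forall>k\<in>{1..M}.
        ((\<lambda>\<tau>. \<eta> \<tau> k) has_real_derivative
           (- (pi * real k)\<^sup>2 * \<eta> t k + 2 * BM M (Y t) (\<eta> t) k)) (at t within {s..}))"

end

theory Submission
  imports Defs
begin

lemma cos_npi_int0:
  assumes "n \<ge> 1"
  shows "((\<lambda>x. cos (real n * pi * x)) has_integral 0) {0..1::real}"
proof -
  have np: "real n * pi \<noteq> 0" using assms by auto
  have "((\<lambda>x. cos (real n * pi * x)) has_integral
        (sin (real n * pi * 1) / (real n * pi) - sin (real n * pi * 0) / (real n * pi))) {0..1::real}"
  proof (rule fundamental_theorem_of_calculus)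
    fix x :: real assume "x \<in> {0..1}"
    show "((\<lambda>x. sin (real n * pi * x) / (real n * pi)) has_vector_derivative cos (real n * pi * x))
          (at x within {0..1})"
      unfolding has_real_derivative_iff_has_vector_derivative[symmetric]
      by (rule derivative_eq_intros refl | use np in simp)+
  qed simp
  then show ?thesis by (simp add: sin_npi)
qed

lemma cos_npi_int1:
  "((\<lambda>x. cos (real 0 * pi * x)) has_integral 1) {0..1::real}"
  using has_integral_const_real[of "1::real" 0 1] by simp

lemma cos_diff_int:
  fixes j k :: nat
  shows "((\<lambda>x. cos ((real j - real k) * pi * x)) has_integral (if j = k then 1 else 0)) {0..1::real}"
proof (cases "j = k")
  case True then show ?thesis using cos_npi_int1 by simp
next
  case False
  show ?thesis
  proof (cases "j > k")
    case True
    have "real j - real k = real (j - k)" using True by simp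
    then show ?thesis using cos_npi_int0[of "j-k"] True by simp
  next
    case f2: False
    have e: "\<And>x. cos ((real j - real k) * pi * x) = cos (real (k - j) * pi * x)"
    proof -
      fix x
      have "(real j - real k) * pi * x = - (real (k - j) * pi * x)" using f2 by (simp add: algebra_simps)
      then show "cos ((real j - real k) * pi * x) = cos (real (k - j) * pi * x)" by simp
    qed
    show ?thesis unfolding e using cos_npi_int0[of "k-j"] f2 False by simp
  qed
qed

lemma cos_sum_int:
  fixes j k :: nat
  assumes "j \<ge> 1"
  shows "((\<lambda>x. cos ((real j + real k) * pi * x)) has_integral 0) {0..1::real}"
  using cos_npi_int0[of "j+k"] assms by simp

definition hc :: "nat \<Rightarrow> real \<Rightarrow> real" where
  "hc k \<xi> = sqrt 2 * cos (real k * pi * \<xi>)"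

lemma hb_orth:
  assumes "j \<ge> 1" "k \<ge> 1"
  shows "((\<lambda>x. hb j x * hb k x) has_integral (if j = k then 1 else 0)) {0..1}"
proof -
  have e: "\<And>x. hb j x * hb k x = cos ((real j - real k) * pi * x) - cos ((real j + real k) * pi * x)"
  proof -
    fix x
    have "hb j x * hb k x = 2 * (sin (real j * pi * x) * sin (real k * pi * x))"
      unfolding hb_def by (simp add: algebra_simps)
    also have "\<dots> = cos (real j * pi * x - real k * pi * x) - cos (real j * pi * x + real k * pi * x)"
      by (simp add: cos_diff cos_add)
    finally show "hb j x * hb k x = cos ((real j - real k) * pi * x) - cos ((real j + real k) * pi * x)"
      by (simp add: algebra_simps)
  qed
  show ?thesis unfolding e using has_integral_diff[OF cos_diff_int[of j k] cos_sum_int[OF assms(1), of k]]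
    by simp
qed

lemma hc_orth:
  assumes "j \<ge> 1" "k \<ge> 1"
  shows "((\<lambda>x. hc j x * hc k x) has_integral (if j = k then 1 else 0)) {0..1}"
proof -
  have e: "\<And>x. hc j x * hc k x = cos ((real j - real k) * pi * x) + cos ((real j + real k) * pi * x)"
  proof -
    fix x
    have "hc j x * hc k x = 2 * (cos (real j * pi * x) * cos (real k * pi * x))"
      unfolding hc_def by (simp add: algebra_simps)
    also have "\<dots> = cos (real j * pi * x - real k * pi * x) + cos (real j * pi * x + real k * pi * x)"
      by (simp add: cos_diff cos_add)
    finally show "hc j x * hc k x = cos ((real j - real k) * pi * x) + cos ((real j + real k) * pi * x)"
      by (simp add: algebra_simps)
  qed
  show ?thesis unfolding e using has_integral_add[OF cos_diff_int[of j k] cos_sum_int[OF assms(1), of k]]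
    by simp
qed

lemma parseval_gen:
  fixes \<phi> :: "nat \<Rightarrow> real \<Rightarrow> real" and a b :: "nat \<Rightarrow> real"
  assumes orth: "\<And>j k. j \<in> {1..M} \<Longrightarrow> k \<in> {1..M} \<Longrightarrow>
     ((\<lambda>x. \<phi> j x * \<phi> k x) has_integral (if j = k then 1 else 0)) {0..1::real}"
  shows "((\<lambda>x. (\<Sum>k=1..M. a k * \<phi> k x) * (\<Sum>k=1..M. b k * \<phi> k x)) has_integral (\<Sum>k=1..M. a k * b k)) {0..1}"
proof -
  have e: "\<And>x. (\<Sum>k=1..M. a k * \<phi> k x) * (\<Sum>k=1..M. b k * \<phi> k x)
      = (\<Sum>j=1..M. \<Sum>k=1..M. a j * b k * (\<phi> j x * \<phi> k x))"
    by (subst sum_product) (simp add: mult_ac)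
  have "((\<lambda>x. \<Sum>j=1..M. \<Sum>k=1..M. a j * b k * (\<phi> j x * \<phi> k x)) has_integral
        (\<Sum>j=1..M. \<Sum>k=1..M. a j * b k * (if j = k then 1 else 0))) {0..1}"
    by (intro has_integral_sum finite_atLeastAtMost has_integral_mult_right orth) auto
  moreover have "(\<Sum>j=1..M. \<Sum>k=1..M. a j * b k * (if j = k then 1 else 0)) = (\<Sum>k=1..M. a k * b k)"
    by (simp add: if_distrib cong: if_cong)
  ultimately show ?thesis unfolding e by simp
qed

definition fnd :: "nat \<Rightarrow> (nat \<Rightarrow> real) \<Rightarrow> real \<Rightarrow> real" where
  "fnd M c \<xi> = (\<Sum>k=1..M. (c k * (real k * pi)) * hc k \<xi>)"

lemma fn_deriv: "(fn M c has_real_derivative fnd M c x) (at x within S)"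
proof -
  have "((\<lambda>x. \<Sum>k=1..M. c k * hb k x) has_real_derivative (\<Sum>k=1..M. (c k * (real k * pi)) * hc k x)) (at x within S)"
  proof (rule DERIV_sum)
    fix k
    show "((\<lambda>x. c k * hb k x) has_real_derivative c k * (real k * pi) * hc k x) (at x within S)"
      unfolding hb_def hc_def
      by (auto intro!: derivative_eq_intros simp: algebra_simps)
  qed
  then show ?thesis unfolding fn_def[abs_def] fnd_def by simp
qed

lemma deriv_fn: "deriv (fn M c) = fnd M c"
  using fn_deriv DERIV_imp_deriv by blast

lemma cont_fn: "continuous_on S (fn M c)"
  unfolding fn_def[abs_def] hb_def by (intro continuous_intros)

lemma cont_fnd: "continuous_on S (fnd M c)"
  unfolding fnd_def[abs_def] hc_def by (intro continuous_intros)

lemma fn_0: "fn M c 0 = 0" unfolding fn_def hb_def by simp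
lemma fn_1: "fn M c 1 = 0" unfolding fn_def hb_def by (simp add: sin_npi)

lemma parseval_fn: "((\<lambda>x. fn M c x * fn M d x) has_integral (\<Sum>k=1..M. c k * d k)) {0..1}"
  unfolding fn_def using parseval_gen[of M hb c d] hb_orth by auto

lemma parseval_fnd: "((\<lambda>x. fnd M c x * fnd M d x) has_integral
     (\<Sum>k=1..M. (real k * pi)^2 * c k * d k)) {0..1}"
proof -
  have "((\<lambda>x. fnd M c x * fnd M d x) has_integral
     (\<Sum>k=1..M. (c k * (real k * pi)) * (d k * (real k * pi)))) {0..1}"
    unfolding fnd_def using parseval_gen[of M hc "\<lambda>k. c k * (real k * pi)" "\<lambda>k. d k * (real k * pi)"] hc_orth by auto
  then show ?thesis by (simp add: power2_eq_square mult_ac)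
qed

lemma L2_norm_cont:
  assumes "continuous_on {0..1} f"
  shows "L2_norm f = sqrt (integral {0..1} (\<lambda>x. (f x)^2))"
proof -
  have "continuous_on {0..1} (\<lambda>x. (f x)^2)" using assms by (intro continuous_intros)
  then have "set_integrable lborel {0..1} (\<lambda>x. (f x)^2)"
    using borel_integrable_atLeastAtMost' by blast
  then show ?thesis unfolding L2_norm_def using set_borel_integral_eq_integral(2) by metis
qed

lemma L2_norm_fn: "L2_norm (fn M c) = sqrt (\<Sum>k=1..M. (c k)^2)"
proof -
  have "integral {0..1} (\<lambda>x. (fn M c x)^2) = (\<Sum>k=1..M. (c k)^2)"
    using parseval_fn[of M c c] by (simp add: power2_eq_square integral_unique)
  then show ?thesis using L2_norm_cont[OF cont_fn] by simp
qed

lemma L2_norm_dfn: "(L2_norm (deriv (fn M c)))^2 = (\<Sum>k=1..M. (real k * pi)^2 * (c k)^2)"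
proof -
  have "integral {0..1} (\<lambda>x. (fnd M c x)^2) = (\<Sum>k=1..M. (real k * pi)^2 * (c k)^2)"
    using parseval_fnd[of M c c] by (simp add: power2_eq_square integral_unique mult_ac)
  moreover have "0 \<le> (\<Sum>k=1..M. (real k * pi)^2 * (c k)^2)" by (intro sum_nonneg) auto
  ultimately show ?thesis unfolding deriv_fn using L2_norm_cont[OF cont_fnd] by simp
qed

lemma int_cont: fixes f :: "real \<Rightarrow> real" assumes "continuous_on {0..1} f" shows "(f has_integral integral {0..1} f) {0..1::real}"
  using assms by (intro integrable_integral integrable_continuous_interval)

lemma BM_eq: "j \<in> {1..M} \<Longrightarrow> BM M c d j =
   integral {0..1} (\<lambda>\<xi>. (fn M c \<xi> * fnd M d \<xi> + fn M d \<xi> * fnd M c \<xi>) * hb j \<xi>)"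
  unfolding BM_def deriv_fn by simp

lemma cont_hb: "continuous_on S (hb j)" unfolding hb_def[abs_def] by (intro continuous_intros)

lemma BM_sum: "(\<Sum>j=1..M. w j * BM M c d j) =
   integral {0..1} (\<lambda>\<xi>. (fn M c \<xi> * fnd M d \<xi> + fn M d \<xi> * fnd M c \<xi>) * fn M w \<xi>)"
proof -
  define g where "g \<xi> = fn M c \<xi> * fnd M d \<xi> + fn M d \<xi> * fnd M c \<xi>" for \<xi>
  have cg: "continuous_on {0..1} g" unfolding g_def
    by (intro continuous_on_add continuous_on_mult cont_fn cont_fnd)
  have ci: "\<And>j. continuous_on {0..1} (\<lambda>\<xi>. g \<xi> * hb j \<xi>)"
    by (intro continuous_on_mult cg cont_hb)
  have h1: "((\<lambda>\<xi>. \<Sum>j=1..M. w j * (g \<xi> * hb j \<xi>)) has_integral (\<Sum>j=1..M. w j * integral {0..1} (\<lambda>\<xi>. g \<xi> * hb j \<xi>))) {0..1}"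
    by (rule has_integral_sum[OF finite_atLeastAtMost], rule has_integral_mult_right, rule int_cont[OF ci])
  have h2: "\<And>\<xi>. (\<Sum>j=1..M. w j * (g \<xi> * hb j \<xi>)) = g \<xi> * fn M w \<xi>"
    unfolding fn_def sum_distrib_left by (rule sum.cong) (simp_all add: mult_ac)
  have h3: "(\<Sum>j=1..M. w j * BM M c d j) = (\<Sum>j=1..M. w j * integral {0..1} (\<lambda>\<xi>. g \<xi> * hb j \<xi>))"
    unfolding g_def by (rule sum.cong) (simp_all add: BM_eq)
  have "((\<lambda>\<xi>. g \<xi> * fn M w \<xi>) has_integral (\<Sum>j=1..M. w j * BM M c d j)) {0..1}"
    using h1 unfolding h2 h3 .
  then show ?thesis unfolding g_def by (rule integral_unique[symmetric])
qed
lemma parts: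
  "integral {0..1} (\<lambda>\<xi>. (fn M c \<xi> * fnd M d \<xi> + fn M d \<xi> * fnd M c \<xi>) * fn M w \<xi>) =
   - integral {0..1} (\<lambda>\<xi>. fn M c \<xi> * fn M d \<xi> * fnd M w \<xi>)"
proof -
  define g1 where "g1 \<xi> = (fn M c \<xi> * fnd M d \<xi> + fn M d \<xi> * fnd M c \<xi>) * fn M w \<xi>" for \<xi>
  define g2 where "g2 \<xi> = fn M c \<xi> * fn M d \<xi> * fnd M w \<xi>" for \<xi>
  have "((\<lambda>\<xi>. g1 \<xi> + g2 \<xi>) has_integral
     (fn M c 1 * fn M d 1 * fn M w 1 - fn M c 0 * fn M d 0 * fn M w 0)) {0..1}"
  proof (rule fundamental_theorem_of_calculus)
    fix x :: real assume "x \<in> {0..1}"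
    have "((\<lambda>x. fn M c x * fn M d x * fn M w x) has_real_derivative g1 x + g2 x) (at x within {0..1})"
      unfolding g1_def g2_def
      by (rule DERIV_cong[OF DERIV_mult[OF DERIV_mult[OF fn_deriv fn_deriv] fn_deriv]]) (simp add: algebra_simps)
    then show "((\<lambda>x. fn M c x * fn M d x * fn M w x) has_vector_derivative g1 x + g2 x) (at x within {0..1})"
      by (simp only: has_real_derivative_iff_has_vector_derivative)
  qed simp
  then have h: "((\<lambda>\<xi>. g1 \<xi> + g2 \<xi>) has_integral 0) {0..1}" by (simp add: fn_0 fn_1)
  have i2: "(g2 has_integral integral {0..1} g2) {0..1}" unfolding g2_def[abs_def]
    by (intro int_cont continuous_on_mult continuous_on_power cont_fn cont_fnd)
  have "((\<lambda>\<xi>. (g1 \<xi> + g2 \<xi>) - g2 \<xi>) has_integral 0 - integral {0..1} g2) {0..1}"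
    by (rule has_integral_diff[OF h i2])
  then have "(g1 has_integral - integral {0..1} g2) {0..1}" by simp
  then have "integral {0..1} g1 = - integral {0..1} g2" by (rule integral_unique)
  then show ?thesis unfolding g1_def[abs_def] g2_def[abs_def] .
qed

lemma parts_self:
  "integral {0..1} (\<lambda>\<xi>. fn M c \<xi> * fn M d \<xi> * fnd M d \<xi>) =
   - (1/2) * integral {0..1} (\<lambda>\<xi>. fnd M c \<xi> * (fn M d \<xi>)^2)"
proof -
  define g1 where "g1 \<xi> = fnd M c \<xi> * (fn M d \<xi>)^2" for \<xi>
  define g2 where "g2 \<xi> = 2 * (fn M c \<xi> * fn M d \<xi> * fnd M d \<xi>)" for \<xi>
  have "((\<lambda>\<xi>. g1 \<xi> + g2 \<xi>) has_integral
     (fn M c 1 * (fn M d 1)^2 - fn M c 0 * (fn M d 0)^2)) {0..1}"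
  proof (rule fundamental_theorem_of_calculus)
    fix x :: real assume "x \<in> {0..1}"
    have "((\<lambda>x. fn M c x * (fn M d x)^2) has_real_derivative g1 x + g2 x) (at x within {0..1})"
      unfolding g1_def g2_def
      unfolding power2_eq_square
      by (rule DERIV_cong[OF DERIV_mult[OF fn_deriv DERIV_mult[OF fn_deriv fn_deriv]]]) (simp add: algebra_simps)
    then show "((\<lambda>x. fn M c x * (fn M d x)^2) has_vector_derivative g1 x + g2 x) (at x within {0..1})"
      by (simp only: has_real_derivative_iff_has_vector_derivative)
  qed simp
  then have h: "((\<lambda>\<xi>. g1 \<xi> + g2 \<xi>) has_integral 0) {0..1}" by (simp add: fn_0 fn_1)
  have i1: "(g1 has_integral integral {0..1} g1) {0..1}" unfolding g1_def[abs_def]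
    by (intro int_cont continuous_on_mult continuous_on_power cont_fn cont_fnd)
  have "((\<lambda>\<xi>. (g1 \<xi> + g2 \<xi>) - g1 \<xi>) has_integral 0 - integral {0..1} g1) {0..1}"
    by (rule has_integral_diff[OF h i1])
  then have "(g2 has_integral - integral {0..1} g1) {0..1}" by simp
  then have "((\<lambda>\<xi>. (1/2) * g2 \<xi>) has_integral (1/2) * (- integral {0..1} g1)) {0..1}"
    by (rule has_integral_mult_right)
  then have "integral {0..1} (\<lambda>\<xi>. (1/2) * g2 \<xi>) = (1/2) * (- integral {0..1} g1)" by (rule integral_unique)
  then show ?thesis unfolding g1_def[abs_def] g2_def[abs_def] by simp
qed

lemma BM_self: "(\<Sum>j=1..M. d j * BM M c d j) =
   (1/2) * integral {0..1} (\<lambda>\<xi>. fnd M c \<xi> * (fn M d \<xi>)^2)"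
  unfolding BM_sum parts parts_self by simp

lemma fn_bound: "\<bar>fn M c \<xi>\<bar> \<le> (\<Sum>k=1..M. \<bar>c k\<bar> * sqrt 2)"
proof -
  have "\<bar>fn M c \<xi>\<bar> \<le> (\<Sum>k=1..M. \<bar>c k * hb k \<xi>\<bar>)" unfolding fn_def by (rule sum_abs)
  also have "\<dots> \<le> (\<Sum>k=1..M. \<bar>c k\<bar> * sqrt 2)"
  proof (rule sum_mono)
    fix k
    have "\<bar>hb k \<xi>\<bar> \<le> sqrt 2" unfolding hb_def by (simp add: abs_mult)
    then show "\<bar>c k * hb k \<xi>\<bar> \<le> \<bar>c k\<bar> * sqrt 2" by (simp add: abs_mult mult_left_mono)
  qed
  finally show ?thesis .
qed

lemma Linf_bound:
  assumes "\<xi> \<in> {0..1}"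
  shows "\<bar>fn M c \<xi>\<bar> \<le> Linf_norm (fn M c)"
proof -
  have bdd: "bdd_above ((\<lambda>\<xi>. \<bar>fn M c \<xi>\<bar>) ` {0<..<1})"
    by (rule bdd_aboveI2[where M="\<Sum>k=1..M. \<bar>c k\<bar> * sqrt 2"]) (rule fn_bound)
  have up: "\<And>x. x \<in> {0<..<1} \<Longrightarrow> \<bar>fn M c x\<bar> \<le> Linf_norm (fn M c)"
    unfolding Linf_norm_def by (rule cSUP_upper[OF _ bdd])
  show ?thesis
  proof (cases "\<xi> \<in> {0<..<1}")
    case True then show ?thesis using up by blast
  next
    case False
    then have "\<xi> = 0 \<or> \<xi> = 1" using assms by auto
    then have "fn M c \<xi> = 0" using fn_0 fn_1 by auto
    moreover have "0 \<le> Linf_norm (fn M c)" using up[of "1/2"] by simp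
    ultimately show ?thesis by simp
  qed
qed

lemma Linf_nonneg: "0 \<le> Linf_norm (fn M c)"
  using Linf_bound[of 0 M c] by simp

lemma amgm: fixes a b \<mu> :: real assumes "\<mu> > 0" shows "2 * (a * b) \<le> \<mu> * a^2 + b^2 / \<mu>"
proof -
  have "0 \<le> (\<mu> * a - b)^2 / \<mu>" using assms by simp
  also have "(\<mu> * a - b)^2 / \<mu> = \<mu> * a^2 + b^2 / \<mu> - 2 * (a * b)"
    using assms by (simp add: power2_eq_square field_simps)
  finally show ?thesis by simp
qed

abbreviation Gs :: "nat \<Rightarrow> real \<Rightarrow> (nat \<Rightarrow> real) \<Rightarrow> real" where
  "Gs M p c \<equiv> (\<Sum>k=1..M. (real k * pi) powr p * (c k)^2)"

lemma Gs_nonneg: "0 \<le> Gs M p c" by (intro sum_nonneg) auto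

lemma Gs0: "Gs M 0 c = (\<Sum>k=1..M. (c k)^2)" by (intro sum.cong) auto
lemma Gs2: "Gs M 2 c = (\<Sum>k=1..M. (real k * pi)^2 * (c k)^2)"
  by (intro sum.cong refl) (simp add: powr_numeral)

lemma int_fn2: "((\<lambda>x. (fn M c x)^2) has_integral Gs M 0 c) {0..1}"
  using parseval_fn[of M c c] unfolding Gs0 by (simp add: power2_eq_square)
lemma int_fnd2: "((\<lambda>x. (fnd M c x)^2) has_integral Gs M 2 c) {0..1}"
  using parseval_fnd[of M c c] unfolding Gs2 by (simp add: power2_eq_square mult_ac)

lemma sup_bound:
  assumes "\<xi> \<in> {0..1}" "\<mu> > 0"
  shows "(fn M d \<xi>)^2 \<le> \<mu> * Gs M 0 d + Gs M 2 d / \<mu>"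
proof -
  let ?g = "\<lambda>x. \<mu> * (fn M d x)^2 + (fnd M d x)^2 / \<mu>"
  have hI: "(?g has_integral (\<mu> * Gs M 0 d + Gs M 2 d / \<mu>)) {0..1}"
    by (intro has_integral_add has_integral_mult_right int_fn2 has_integral_divide int_fnd2)
  have cg: "continuous_on {0..1} ?g"
    using assms(2) by (intro continuous_intros cont_fn cont_fnd) auto
  have "((\<lambda>x. 2 * (fn M d x * fnd M d x)) has_integral ((fn M d \<xi>)^2 - (fn M d 0)^2)) {0..\<xi>}"
  proof (rule fundamental_theorem_of_calculus)
    show "0 \<le> \<xi>" using assms by simp
    fix x :: real assume "x \<in> {0..\<xi>}"
    have "((\<lambda>x. (fn M d x)^2) has_real_derivative 2 * (fn M d x * fnd M d x)) (at x within {0..\<xi>})"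
      unfolding power2_eq_square
      by (rule DERIV_cong[OF DERIV_mult[OF fn_deriv fn_deriv]]) (simp add: algebra_simps)
    then show "((\<lambda>x. (fn M d x)^2) has_vector_derivative 2 * (fn M d x * fnd M d x)) (at x within {0..\<xi>})"
      by (simp only: has_real_derivative_iff_has_vector_derivative)
  qed
  then have h1: "((\<lambda>x. 2 * (fn M d x * fnd M d x)) has_integral (fn M d \<xi>)^2) {0..\<xi>}"
    by (simp add: fn_0)
  have sub: "{0..\<xi>} \<subseteq> {0..1}" using assms by auto
  have cg': "continuous_on {0..\<xi>} ?g" using continuous_on_subset[OF cg sub] .
  have h2: "(?g has_integral integral {0..\<xi>} ?g) {0..\<xi>}"
    using cg' by (intro integrable_integral integrable_continuous_interval)
  have "(fn M d \<xi>)^2 \<le> integral {0..\<xi>} ?g"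
    by (rule has_integral_le[OF h1 h2]) (rule amgm[OF assms(2)])
  also have "\<dots> \<le> integral {0..1} ?g"
    by (rule integral_subset_le[OF sub])
       (use cg' cg assms(2) in \<open>auto intro!: integrable_continuous_interval\<close>)
  also have "\<dots> = \<mu> * Gs M 0 d + Gs M 2 d / \<mu>" using hI by (rule integral_unique)
  finally show ?thesis .
qed

lemma two_pow_core:
  fixes b \<theta> p q :: real
  assumes "b > 0" "q \<le> 0" "0 \<le> p" "q \<le> r" "r \<le> p"
  shows "b powr r \<le> b powr p + b powr q" "1 \<le> b powr p + b powr q"
proof -
  have "b powr r \<le> b powr p + b powr q \<and> 1 \<le> b powr p + b powr q"
  proof (cases "b \<ge> 1")
    case True
    have "b powr r \<le> b powr p" using powr_mono[OF assms(5) True] .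
    moreover have "b powr 0 \<le> b powr p" using powr_mono[OF assms(3) True] .
    moreover have "b powr 0 = 1" "0 \<le> b powr q" using assms(1) by auto
    ultimately show ?thesis by linarith
  next
    case False
    have "b powr r \<le> b powr q" using powr_mono'[OF assms(4), of b] False assms(1) by simp
    moreover have "b powr 0 \<le> b powr q" using powr_mono'[OF assms(2), of b] False assms(1) by simp
    moreover have "b powr 0 = 1" "0 \<le> b powr p" using assms(1) by auto
    ultimately show ?thesis by linarith
  qed
  then show "b powr r \<le> b powr p + b powr q" "1 \<le> b powr p + b powr q" by auto
qed

lemma key_ineq:
  fixes S a \<theta> :: real
  assumes S: "S > 0" and a: "a > 0" and th: "0 \<le> \<theta>" "\<theta> \<le> 1"
  shows "2*S*(4*S) powr (1-2*\<theta>) + 2*S*(4*S) powr (2*\<theta>-1) * a powr (2-4*\<theta>)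
         \<le> a powr (2-2*\<theta>) + 16*S^2 * a powr (-2*\<theta>)"
proof -
  define u where "u = 4*S"
  define b where "b = a / u"
  have u: "u > 0" using S u_def by simp
  have b: "b > 0" using a u b_def by simp
  have ab: "a = u * b" using u b_def by simp
  have c1: "1 \<le> b powr (2-2*\<theta>) + b powr (-2*\<theta>)"
    using two_pow_core(2)[OF b, of "-2*\<theta>" "2-2*\<theta>" "2-4*\<theta>"] th by simp
  have c2: "b powr (2-4*\<theta>) \<le> b powr (2-2*\<theta>) + b powr (-2*\<theta>)"
    using two_pow_core(1)[OF b, of "-2*\<theta>" "2-2*\<theta>" "2-4*\<theta>"] th by simp
  have U: "u powr (2-2*\<theta>) > 0" using u by simp
  have e1: "2*S*(4*S) powr (1-2*\<theta>) = (1/2) * u powr (2-2*\<theta>)"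
  proof -
    have "u powr (2-2*\<theta>) = u powr (1 + (1-2*\<theta>))" by simp
    also have "\<dots> = u powr 1 * u powr (1-2*\<theta>)" by (rule powr_add)
    also have "\<dots> = u * u powr (1-2*\<theta>)" using u by simp
    finally show ?thesis unfolding u_def using S by simp
  qed
  have e2: "2*S*(4*S) powr (2*\<theta>-1) * a powr (2-4*\<theta>) = (1/2) * u powr (2-2*\<theta>) * b powr (2-4*\<theta>)"
  proof -
    have "a powr (2-4*\<theta>) = u powr (2-4*\<theta>) * b powr (2-4*\<theta>)" unfolding ab using u b by (simp add: powr_mult)
    moreover have "u * u powr (2*\<theta>-1) * u powr (2-4*\<theta>) = u powr (2-2*\<theta>)"
    proof -
      have "u powr (2-2*\<theta>) = u powr (1 + (2*\<theta>-1) + (2-4*\<theta>))" by (simp add: algebra_simps)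
      also have "\<dots> = u powr 1 * u powr (2*\<theta>-1) * u powr (2-4*\<theta>)" by (simp only: powr_add)
      finally show ?thesis using u by simp
    qed
    ultimately show ?thesis unfolding u_def using S by (simp add: mult_ac)
  qed
  have e3: "a powr (2-2*\<theta>) + 16*S^2 * a powr (-2*\<theta>) = u powr (2-2*\<theta>) * (b powr (2-2*\<theta>) + b powr (-2*\<theta>))"
  proof -
    have "a powr (2-2*\<theta>) = u powr (2-2*\<theta>) * b powr (2-2*\<theta>)" unfolding ab using u b by (simp add: powr_mult)
    moreover have "a powr (-2*\<theta>) = u powr (-2*\<theta>) * b powr (-2*\<theta>)" unfolding ab using u b by (simp add: powr_mult)
    moreover have "16*S^2 = u powr 2" unfolding u_def using S by (simp add: powr_numeral power2_eq_square)
    moreover have "u powr 2 * u powr (-2*\<theta>) = u powr (2-2*\<theta>)"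
    proof -
      have "u powr (2-2*\<theta>) = u powr (2 + (-2*\<theta>))" by simp
      then show ?thesis by (simp only: powr_add)
    qed
    ultimately show ?thesis by (simp add: algebra_simps)
  qed
  have "(1/2) * u powr (2-2*\<theta>) + (1/2) * u powr (2-2*\<theta>) * b powr (2-4*\<theta>)
        = u powr (2-2*\<theta>) * ((1 + b powr (2-4*\<theta>)) / 2)" by (simp add: algebra_simps)
  also have "\<dots> \<le> u powr (2-2*\<theta>) * (b powr (2-2*\<theta>) + b powr (-2*\<theta>))"
    using c1 c2 U by (intro mult_left_mono) auto
  finally show ?thesis unfolding e1 e2 e3 .
qed

lemma interp_ineq:
  fixes \<tau> a \<theta> :: real
  assumes t: "\<tau> > 0" and a: "a > 0" and th: "0 \<le> \<theta>" "\<theta> \<le> 1"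
  shows "1 \<le> \<tau> powr (-\<theta>) * a powr (-2*\<theta>) + \<tau> powr (1-\<theta>) * a powr (2-2*\<theta>)"
proof -
  define x where "x = \<tau> * a^2"
  have x: "x > 0" using t a x_def by simp
  have e1: "\<tau> powr (-\<theta>) * a powr (-2*\<theta>) = x powr (-\<theta>)"
  proof -
    have "a powr (-2*\<theta>) = (a powr 2) powr (-\<theta>)" by (simp add: powr_powr)
    also have "a powr 2 = a^2" using a by (simp add: powr_numeral)
    finally have "a powr (-2*\<theta>) = (a^2) powr (-\<theta>)" .
    then show ?thesis unfolding x_def using t a by (simp add: powr_mult)
  qed
  have e2: "\<tau> powr (1-\<theta>) * a powr (2-2*\<theta>) = x powr (1-\<theta>)"
  proof -
    have "a powr (2-2*\<theta>) = (a powr 2) powr (1-\<theta>)" by (simp add: powr_powr algebra_simps)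
    also have "a powr 2 = a^2" using a by (simp add: powr_numeral)
    finally have "a powr (2-2*\<theta>) = (a^2) powr (1-\<theta>)" .
    then show ?thesis unfolding x_def using t a by (simp add: powr_mult)
  qed
  show ?thesis unfolding e1 e2 using two_pow_core(2)[OF x, of "-\<theta>" "1-\<theta>" 0] th by simp
qed

lemma abs_int_le:
  fixes f g :: "real \<Rightarrow> real"
  assumes "(f has_integral I) {0..1}" "(g has_integral J) {0..1}" "\<And>x. x \<in> {0..1} \<Longrightarrow> \<bar>f x\<bar> \<le> g x"
  shows "\<bar>I\<bar> \<le> J"
proof -
  have "I \<le> J" by (rule has_integral_le[OF assms(1,2)]) (use assms(3) in force)
  moreover have "-I \<le> J" by (rule has_integral_le[OF has_integral_neg[OF assms(1)] assms(2)]) (use assms(3) in force)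
  ultimately show ?thesis by linarith
qed

lemma Gs_w: "Gs M 2 (\<lambda>k. (real k * pi) powr (-2*\<theta>) * d k) = Gs M (2-4*\<theta>) d"
proof (intro sum.cong refl)
  fix k assume "k \<in> {1..M}"
  then have p: "real k * pi > 0" by auto
  have "(real k * pi) powr 2 * ((real k * pi) powr (- 2 * \<theta>) * d k)^2
      = ((real k * pi) powr 2 * (real k * pi) powr (- 2 * \<theta>) * (real k * pi) powr (- 2 * \<theta>)) * (d k)^2"
    by (simp add: power2_eq_square mult_ac)
  also have "(real k * pi) powr 2 * (real k * pi) powr (- 2 * \<theta>) * (real k * pi) powr (- 2 * \<theta>) = (real k * pi) powr (2-4*\<theta>)"
  proof -
    have "(real k * pi) powr (2-4*\<theta>) = (real k * pi) powr (2 + (- 2 * \<theta>) + (- 2 * \<theta>))" by (simp add: algebra_simps)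
    then show ?thesis by (simp only: powr_add)
  qed
  finally show "(real k * pi) powr 2 * ((real k * pi) powr (- 2 * \<theta>) * d k)^2 = (real k * pi) powr (2-4*\<theta>) * (d k)^2" .
qed

lemma G_bound:
  assumes th: "0 \<le> \<theta>" "\<theta> < 1" and S: "S > 0" and hS: "\<And>\<xi>. \<xi> \<in> {0..1} \<Longrightarrow> \<bar>fn M y \<xi>\<bar> \<le> S"
  shows "4 * \<bar>\<Sum>j=1..M. ((real j * pi) powr (-2*\<theta>) * d j) * BM M y d j\<bar>
         \<le> Gs M (2-2*\<theta>) d + 16*S^2 * Gs M (-2*\<theta>) d"
proof -
  define w where "w k = (real k * pi) powr (-2*\<theta>) * d k" for k
  define \<mu> where "\<mu> = (4*S) powr (1-2*\<theta>)"
  have mu: "\<mu> > 0" unfolding \<mu>_def using S by simp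
  have imu: "1/\<mu> = (4*S) powr (2*\<theta>-1)" unfolding \<mu>_def using S by (simp add: powr_minus_divide[symmetric])
  have e1: "(\<Sum>j=1..M. w j * BM M y d j) = - integral {0..1} (\<lambda>\<xi>. fn M y \<xi> * fn M d \<xi> * fnd M w \<xi>)"
    unfolding BM_sum parts ..
  have i1: "((\<lambda>\<xi>. fn M y \<xi> * fn M d \<xi> * fnd M w \<xi>) has_integral integral {0..1} (\<lambda>\<xi>. fn M y \<xi> * fn M d \<xi> * fnd M w \<xi>)) {0..1}"
    by (intro int_cont continuous_on_mult cont_fn cont_fnd)
  have i2: "((\<lambda>\<xi>. (S/2) * (\<mu> * (fn M d \<xi>)^2 + (fnd M w \<xi>)^2 / \<mu>)) has_integral (S/2) * (\<mu> * Gs M 0 d + Gs M 2 w / \<mu>)) {0..1}"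
    by (intro has_integral_mult_right has_integral_add has_integral_divide int_fn2 int_fnd2)
  have b: "\<bar>integral {0..1} (\<lambda>\<xi>. fn M y \<xi> * fn M d \<xi> * fnd M w \<xi>)\<bar> \<le> (S/2) * (\<mu> * Gs M 0 d + Gs M 2 w / \<mu>)"
  proof (rule abs_int_le[OF i1 i2])
    fix x :: real assume x: "x \<in> {0..1}"
    have "\<bar>fn M y x * fn M d x * fnd M w x\<bar> = \<bar>fn M y x\<bar> * \<bar>fn M d x * fnd M w x\<bar>" by (simp add: abs_mult)
    also have "\<dots> \<le> S * \<bar>fn M d x * fnd M w x\<bar>" using hS[OF x] by (intro mult_right_mono) auto
    also have "\<bar>fn M d x * fnd M w x\<bar> = \<bar>fn M d x\<bar> * \<bar>fnd M w x\<bar>" by (simp add: abs_mult)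
    also have "2 * (\<bar>fn M d x\<bar> * \<bar>fnd M w x\<bar>) \<le> \<mu> * \<bar>fn M d x\<bar>^2 + \<bar>fnd M w x\<bar>^2 / \<mu>" by (rule amgm[OF mu])
    then have "S * (\<bar>fn M d x\<bar> * \<bar>fnd M w x\<bar>) \<le> (S/2) * (\<mu> * (fn M d x)^2 + (fnd M w x)^2 / \<mu>)"
      using S by (simp add: mult_left_mono)
    finally show "\<bar>fn M y x * fn M d x * fnd M w x\<bar> \<le> (S/2) * (\<mu> * (fn M d x)^2 + (fnd M w x)^2 / \<mu>)" 
      using S by (simp add: mult_left_mono)
  qed
  have gw: "Gs M 2 w = Gs M (2-4*\<theta>) d" unfolding w_def[abs_def] by (rule Gs_w)
  have "4 * \<bar>\<Sum>j=1..M. w j * BM M y d j\<bar> \<le> 2*S * (\<mu> * Gs M 0 d + Gs M (2-4*\<theta>) d / \<mu>)"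
    using b unfolding e1 gw by simp
  also have "\<dots> = (\<Sum>k=1..M. (2*S*\<mu> + 2*S*(4*S) powr (2*\<theta>-1) * (real k * pi) powr (2-4*\<theta>)) * (d k)^2)"
  proof -
    have "Gs M (2-4*\<theta>) d / \<mu> = (\<Sum>k=1..M. (4*S) powr (2*\<theta>-1) * ((real k * pi) powr (2-4*\<theta>) * (d k)^2))"
      unfolding divide_inverse_commute[symmetric] imu[symmetric] by (simp add: sum_distrib_left divide_inverse_commute)
    then show ?thesis unfolding Gs0 by (simp add: sum_distrib_left distrib_left distrib_right sum.distrib mult_ac)
  qed
  also have "\<dots> \<le> (\<Sum>k=1..M. ((real k * pi) powr (2-2*\<theta>) + 16*S^2 * (real k * pi) powr (-2*\<theta>)) * (d k)^2)"
  proof (rule sum_mono)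
    fix k assume "k \<in> {1..M}"
    then have p: "real k * pi > 0" by auto
    show "(2*S*\<mu> + 2*S*(4*S) powr (2*\<theta>-1) * (real k * pi) powr (2-4*\<theta>)) * (d k)^2
       \<le> ((real k * pi) powr (2-2*\<theta>) + 16*S^2 * (real k * pi) powr (-2*\<theta>)) * (d k)^2"
      using key_ineq[OF S p th(1)] th(2) unfolding \<mu>_def by (intro mult_right_mono) auto
  qed
  also have "\<dots> = Gs M (2-2*\<theta>) d + 16*S^2 * Gs M (-2*\<theta>) d"
    unfolding sum_distrib_left sum.distrib[symmetric] by (rule sum.cong) (simp_all add: algebra_simps)
  finally show ?thesis unfolding w_def .
qed

lemma fine_bound:
  assumes ep: "\<epsilon> > 0"
  shows "4 * (\<Sum>j=1..M. d j * BM M y d j) \<le> 2 * Gs M 2 d + (2*\<epsilon> * Gs M 2 y + 1/(8*\<epsilon>^2)) * Gs M 0 d"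
proof -
  let ?m0 = "Gs M 0 d" and ?D0 = "Gs M 2 d" and ?P = "Gs M 2 y"
  have i1: "((\<lambda>\<xi>. fnd M y \<xi> * (fn M d \<xi>)^2) has_integral integral {0..1} (\<lambda>\<xi>. fnd M y \<xi> * (fn M d \<xi>)^2)) {0..1}"
    by (intro int_cont continuous_on_mult continuous_on_power cont_fn cont_fnd)
  have m0: "0 \<le> ?m0" "0 \<le> ?D0" "0 \<le> ?P" by (rule Gs_nonneg)+
  have key: "integral {0..1} (\<lambda>\<xi>. fnd M y \<xi> * (fn M d \<xi>)^2) \<le> \<epsilon> * ?P * ?m0 + ?D0 + ?m0 / (16*\<epsilon>^2)"
  proof (cases "?m0 = 0")
    case True
    have "\<And>k. k \<in> {1..M} \<Longrightarrow> (d k)^2 = 0"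
    proof -
      fix k assume k: "k \<in> {1..M}"
      have "(\<Sum>k=1..M. (d k)^2) = 0" using True unfolding Gs0 .
      then show "(d k)^2 = 0" using sum_nonneg_eq_0_iff[of "{1..M}" "\<lambda>k. (d k)^2"] k by auto
    qed
    then have "\<And>\<xi>. fn M d \<xi> = 0" unfolding fn_def by (intro sum.neutral) auto
    then have "integral {0..1} (\<lambda>\<xi>. fnd M y \<xi> * (fn M d \<xi>)^2) = 0" by simp
    then show ?thesis using m0 ep True by simp
  next
    case False
    then have m0p: "?m0 > 0" using m0 by linarith
    define \<mu> where "\<mu> = 1/(4*\<epsilon>)"
    have mu: "\<mu> > 0" unfolding \<mu>_def using ep by simp
    define B where "B = \<mu> * ?m0 + ?D0 / \<mu>"
    define \<nu> where "\<nu> = 2 * \<epsilon> * ?m0"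
    have nu: "\<nu> > 0" unfolding \<nu>_def using ep m0p by simp
    have i2: "((\<lambda>\<xi>. \<epsilon> * ?m0 * (fnd M y \<xi>)^2 + B * (fn M d \<xi>)^2 / (4*\<epsilon>*?m0)) has_integral
               (\<epsilon> * ?m0 * ?P + B * ?m0 / (4*\<epsilon>*?m0))) {0..1}"
      by (intro has_integral_add has_integral_mult_right has_integral_divide int_fn2 int_fnd2)
    have "integral {0..1} (\<lambda>\<xi>. fnd M y \<xi> * (fn M d \<xi>)^2) \<le> \<epsilon> * ?m0 * ?P + B * ?m0 / (4*\<epsilon>*?m0)"
    proof (rule has_integral_le[OF i1 i2])
      fix x :: real assume x: "x \<in> {0..1}"
      have sb: "(fn M d x)^2 \<le> B" unfolding B_def by (rule sup_bound[OF x mu])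
      have "2 * (fnd M y x * (fn M d x)^2) \<le> \<nu> * (fnd M y x)^2 + ((fn M d x)^2)^2 / \<nu>"
        by (rule amgm[OF nu])
      moreover have "((fn M d x)^2)^2 \<le> B * (fn M d x)^2"
        using sb by (simp add: power2_eq_square mult_right_mono)
      ultimately have "2 * (fnd M y x * (fn M d x)^2) \<le> \<nu> * (fnd M y x)^2 + B * (fn M d x)^2 / \<nu>"
        using nu by (smt (verit) divide_right_mono)
      then show "fnd M y x * (fn M d x)^2 \<le> \<epsilon> * ?m0 * (fnd M y x)^2 + B * (fn M d x)^2 / (4*\<epsilon>*?m0)"
        unfolding \<nu>_def by (simp add: field_simps)
    qed
    also have "\<epsilon> * ?m0 * ?P + B * ?m0 / (4*\<epsilon>*?m0) = \<epsilon> * ?P * ?m0 + ?D0 + ?m0 / (16*\<epsilon>^2)"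
      unfolding B_def \<mu>_def using ep m0p by (simp add: field_simps power2_eq_square)
    finally show ?thesis .
  qed
  have "4 * (\<Sum>j=1..M. d j * BM M y d j) = 2 * integral {0..1} (\<lambda>\<xi>. fnd M y \<xi> * (fn M d \<xi>)^2)"
    unfolding BM_self by simp
  also have "\<dots> \<le> 2 * (\<epsilon> * ?P * ?m0 + ?D0 + ?m0 / (16*\<epsilon>^2))" using key by simp
  also have "\<dots> = 2 * ?D0 + (2*\<epsilon> * ?P + 1/(8*\<epsilon>^2)) * ?m0" by (simp add: field_simps power2_eq_square)
  finally show ?thesis .
qed

lemma deriv_cont_on:
  fixes \<phi> :: "real \<Rightarrow> real"
  assumes "\<And>u. u \<in> S \<Longrightarrow> (\<phi> has_real_derivative \<phi>' u) (at u within S)"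
  shows "continuous_on S \<phi>"
  unfolding continuous_on_eq_continuous_within using assms DERIV_continuous by blast

lemma gronwall:
  fixes \<phi> \<phi>' a :: "real \<Rightarrow> real"
  assumes rt: "r \<le> t"
    and d: "\<And>u. u \<in> {r..t} \<Longrightarrow> (\<phi> has_real_derivative \<phi>' u) (at u within {r..t})"
    and le: "\<And>u. u \<in> {r..t} \<Longrightarrow> \<phi>' u \<le> a u * \<phi> u"
    and ca: "continuous_on {r..t} a"
  shows "\<phi> t \<le> \<phi> r * exp (integral {r..t} a)"
proof -
  define I where "I u = integral {r..u} a" for u
  define \<psi> where "\<psi> u = \<phi> u * exp (- I u)" for u
  define \<psi>' where "\<psi>' u = \<phi>' u * exp (- I u) - \<phi> u * (a u * exp (- I u))" for u
  have dI: "\<And>u. u \<in> {r..t} \<Longrightarrow> (I has_real_derivative a u) (at u within {r..t})"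
    unfolding I_def[abs_def] has_real_derivative_iff_has_vector_derivative
    by (rule integral_has_vector_derivative[OF ca])
  have d\<psi>: "\<And>u. u \<in> {r..t} \<Longrightarrow> (\<psi> has_vector_derivative \<psi>' u) (at u within {r..t})"
  proof -
    fix u assume u: "u \<in> {r..t}"
    have "((\<lambda>u. \<phi> u * exp (- I u)) has_real_derivative
           \<phi>' u * exp (- I u) + (- a u * exp (- I u)) * \<phi> u) (at u within {r..t})"
      by (rule DERIV_mult[OF d[OF u]], rule DERIV_cong[OF DERIV_chain2[OF DERIV_exp DERIV_minus[OF dI[OF u]]]]) simp
    then show "(\<psi> has_vector_derivative \<psi>' u) (at u within {r..t})"
      unfolding \<psi>_def[abs_def] \<psi>'_def has_real_derivative_iff_has_vector_derivative[symmetric]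
      by (rule DERIV_cong) (simp add: algebra_simps)
  qed
  have "(\<psi>' has_integral (\<psi> t - \<psi> r)) {r..t}"
    by (rule fundamental_theorem_of_calculus[OF rt d\<psi>])
  moreover have "((\<lambda>u. 0::real) has_integral 0) {r..t}" by simp
  ultimately have "\<psi> t - \<psi> r \<le> 0"
  proof (rule has_integral_le)
    fix u assume u: "u \<in> {r..t}"
    have "\<phi>' u * exp (- I u) \<le> a u * \<phi> u * exp (- I u)" using le[OF u] by simp
    then show "\<psi>' u \<le> 0" unfolding \<psi>'_def by (simp add: algebra_simps)
  qed
  then have "\<phi> t * exp (- I t) \<le> \<phi> r" unfolding \<psi>_def I_def by simp
  then have "\<phi> t * exp (- I t) * exp (I t) \<le> \<phi> r * exp (I t)" by (simp add: mult_right_mono)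
  then show ?thesis unfolding I_def by (simp add: exp_minus field_simps)
qed

lemma eta_deriv:
  assumes "is_eta M Y s h \<eta>" "u \<ge> s" "k \<in> {1..M}"
  shows "((\<lambda>\<tau>. \<eta> \<tau> k) has_real_derivative (- (pi * real k)\<^sup>2 * \<eta> u k + 2 * BM M (Y u) (\<eta> u) k)) (at u within {s..})"
  using assms unfolding is_eta_def by blast

definition dGe :: "nat \<Rightarrow> real \<Rightarrow> (nat \<Rightarrow> real) \<Rightarrow> (nat \<Rightarrow> real) \<Rightarrow> real" where
  "dGe M p y d = -2 * Gs M (p+2) d + 4 * (\<Sum>j=1..M. ((real j * pi) powr p * d j) * BM M y d j)"

lemma G_deriv:
  assumes eta: "is_eta M Y s h \<eta>" and u: "u \<ge> s"
  shows "((\<lambda>u. Gs M p (\<eta> u)) has_real_derivative dGe M p (Y u) (\<eta> u)) (at u within {s..})"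
proof -
  have "((\<lambda>u. Gs M p (\<eta> u)) has_real_derivative
     (\<Sum>k=1..M. (real k * pi) powr p * (2 * \<eta> u k * (- (pi * real k)\<^sup>2 * \<eta> u k + 2 * BM M (Y u) (\<eta> u) k)))) (at u within {s..})"
  proof (rule DERIV_sum)
    fix k assume k: "k \<in> {1..M}"
    show "((\<lambda>u. (real k * pi) powr p * (\<eta> u k)^2) has_real_derivative
       (real k * pi) powr p * (2 * \<eta> u k * (- (pi * real k)\<^sup>2 * \<eta> u k + 2 * BM M (Y u) (\<eta> u) k))) (at u within {s..})"
      by (rule DERIV_cmult, rule DERIV_cong[OF DERIV_power[OF eta_deriv[OF eta u k], of 2]]) simp
  qed
  moreover have "(\<Sum>k=1..M. (real k * pi) powr p * (2 * \<eta> u k * (- (pi * real k)\<^sup>2 * \<eta> u k + 2 * BM M (Y u) (\<eta> u) k)))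
       = dGe M p (Y u) (\<eta> u)"
  proof -
    have "\<And>k. k \<in> {1..M} \<Longrightarrow> (real k * pi) powr p * (2 * \<eta> u k * (- (pi * real k)\<^sup>2 * \<eta> u k + 2 * BM M (Y u) (\<eta> u) k))
        = -2 * ((real k * pi) powr (p+2) * (\<eta> u k)^2) + 4 * (((real k * pi) powr p * \<eta> u k) * BM M (Y u) (\<eta> u) k)"
    proof -
      fix k assume k: "k \<in> {1..M}"
      have "(real k * pi) powr (p+2) = (real k * pi) powr p * (pi * real k)^2"
        using k by (simp add: powr_add powr_numeral mult.commute)
      then show "(real k * pi) powr p * (2 * \<eta> u k * (- (pi * real k)\<^sup>2 * \<eta> u k + 2 * BM M (Y u) (\<eta> u) k))
        = -2 * ((real k * pi) powr (p+2) * (\<eta> u k)^2) + 4 * (((real k * pi) powr p * \<eta> u k) * BM M (Y u) (\<eta> u) k)"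
        by (simp add: algebra_simps power2_eq_square)
    qed
    then show ?thesis unfolding dGe_def sum_distrib_left sum.distrib[symmetric] by (rule sum.cong[OF refl])
  qed
  ultimately show ?thesis by simp
qed

lemma dGe_theta:
  assumes th: "0 \<le> \<theta>" "\<theta> < 1" and S: "S > 0" and hS: "\<And>\<xi>. \<xi> \<in> {0..1} \<Longrightarrow> \<bar>fn M y \<xi>\<bar> \<le> S"
  shows "dGe M (-2*\<theta>) y d \<le> - Gs M (2-2*\<theta>) d + 16*S^2 * Gs M (-2*\<theta>) d"
proof -
  have "-2*\<theta>+2 = 2-2*\<theta>" by simp
  then show ?thesis using G_bound[OF th S hS, of d] unfolding dGe_def by (simp add: abs_le_iff)
qed

lemma dGe_fine:
  assumes "\<epsilon> > 0"
  shows "dGe M 0 y d \<le> (2*\<epsilon> * Gs M 2 y + 1/(8*\<epsilon>^2)) * Gs M 0 d"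
proof -
  have "(\<Sum>j=1..M. ((real j * pi) powr 0 * d j) * BM M y d j) = (\<Sum>j=1..M. d j * BM M y d j)"
    by (intro sum.cong) auto
  then show ?thesis using fine_bound[OF assms, where M=M and d=d and y=y] unfolding dGe_def by simp
qed

lemma G_deriv_sub:
  assumes eta: "is_eta M Y s h \<eta>" and a: "s \<le> a" and u: "u \<in> {a..b}"
  shows "((\<lambda>u. Gs M p (\<eta> u)) has_real_derivative dGe M p (Y u) (\<eta> u)) (at u within {a..b})"
  by (rule DERIV_subset[OF G_deriv[OF eta]]) (use a u in auto)

lemma G_cont:
  assumes eta: "is_eta M Y s h \<eta>" and a: "s \<le> a"
  shows "continuous_on {a..b} (\<lambda>u. Gs M p (\<eta> u))"
  by (rule deriv_cont_on, rule G_deriv_sub[OF eta a])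

lemma G_int:
  assumes eta: "is_eta M Y s h \<eta>" and a: "s \<le> a"
  shows "((\<lambda>u. Gs M p (\<eta> u)) has_integral integral {a..b} (\<lambda>u. Gs M p (\<eta> u))) {a..b}"
  using G_cont[OF eta a] by (intro integrable_integral integrable_continuous_interval)

lemma gron_const:
  assumes eta: "is_eta M Y s h \<eta>" and a: "s \<le> a" and ab: "a \<le> b" and c: "c \<ge> 0"
    and le: "\<And>u. u \<in> {a..b} \<Longrightarrow> dGe M p (Y u) (\<eta> u) \<le> c * Gs M p (\<eta> u)"
  shows "Gs M p (\<eta> b) \<le> Gs M p (\<eta> a) * exp (c * (b - a))"
proof -
  have "Gs M p (\<eta> b) \<le> Gs M p (\<eta> a) * exp (integral {a..b} (\<lambda>u. c))"
    by (rule gronwall[OF ab G_deriv_sub[OF eta a] le]) (auto intro: continuous_intros)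
  then show ?thesis using ab by (simp add: mult.commute)
qed

lemma short_time:
  assumes eta: "is_eta M Y s h \<eta>" and th: "0 \<le> \<theta>" "\<theta> < 1" and S: "S > 0"
    and hS: "\<And>u \<xi>. u \<in> {s..t'} \<Longrightarrow> \<xi> \<in> {0..1} \<Longrightarrow> \<bar>fn M (Y u) \<xi>\<bar> \<le> S"
    and st: "s < t'" and small: "(t' - s) * S^2 \<le> 1"
  shows "Gs M 0 (\<eta> t') \<le> (exp 16 * (1 + 17 * exp 16)) * (t' - s) powr (-\<theta>) * Gs M (-2*\<theta>) (\<eta> s)"
proof -
  define \<tau> where "\<tau> = t' - s"
  have tau: "\<tau> > 0" unfolding \<tau>_def using st by simp
  define c where "c = 16 * S^2"
  have c0: "c \<ge> 0" unfolding c_def by simp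
  have ctau: "c * \<tau> \<le> 16" unfolding c_def \<tau>_def using small by (simp add: mult.commute)
  let ?G = "\<lambda>u. Gs M (-2*\<theta>) (\<eta> u)" and ?D = "\<lambda>u. Gs M (2-2*\<theta>) (\<eta> u)" and ?m = "\<lambda>u. Gs M 0 (\<eta> u)"
  have dG: "\<And>u. u \<in> {s..t'} \<Longrightarrow> dGe M (-2*\<theta>) (Y u) (\<eta> u) \<le> - ?D u + c * ?G u"
    unfolding c_def by (rule dGe_theta[OF th S hS])
  have dm: "\<And>u. u \<in> {s..t'} \<Longrightarrow> dGe M 0 (Y u) (\<eta> u) \<le> c * ?m u"
  proof -
    fix u assume u: "u \<in> {s..t'}"
    have "dGe M (-2*0) (Y u) (\<eta> u) \<le> - Gs M (2-2*0) (\<eta> u) + c * Gs M (-2*0) (\<eta> u)"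
      unfolding c_def by (rule dGe_theta[OF _ _ S hS[OF u]]) auto
    then show "dGe M 0 (Y u) (\<eta> u) \<le> c * ?m u" using Gs_nonneg[where M=M and p=2 and c="\<eta> u"] by simp
  qed
  have Gb: "\<And>u. u \<in> {s..t'} \<Longrightarrow> ?G u \<le> exp 16 * ?G s"
  proof -
    fix u assume u: "u \<in> {s..t'}"
    have "?G u \<le> ?G s * exp (c * (u - s))"
    proof (rule gron_const[OF eta order_refl _ c0])
      show "s \<le> u" using u by simp
      fix v assume v: "v \<in> {s..u}"
      then have v': "v \<in> {s..t'}" using u by auto
      show "dGe M (-2*\<theta>) (Y v) (\<eta> v) \<le> c * ?G v" using dG[OF v'] Gs_nonneg[where M=M and p="2-2*\<theta>" and c="\<eta> v"] by simp
    qed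
    also have "\<dots> \<le> ?G s * exp 16"
    proof (rule mult_left_mono)
      have "c * (u - s) \<le> c * \<tau>" unfolding \<tau>_def using u c0 by (intro mult_left_mono) auto
      then show "exp (c * (u - s)) \<le> exp 16" using ctau by simp
    qed (rule Gs_nonneg)
    finally show "?G u \<le> exp 16 * ?G s" by (simp add: mult.commute)
  qed
  have mb: "\<And>u. u \<in> {s..t'} \<Longrightarrow> ?m t' \<le> exp 16 * ?m u"
  proof -
    fix u assume u: "u \<in> {s..t'}"
    have "?m t' \<le> ?m u * exp (c * (t' - u))"
    proof (rule gron_const[OF eta _ _ c0])
      show "s \<le> u" "u \<le> t'" using u by auto
      fix v assume v: "v \<in> {u..t'}"
      then have v': "v \<in> {s..t'}" using u by auto
      show "dGe M 0 (Y v) (\<eta> v) \<le> c * ?m v" using dm[OF v'] .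
    qed
    also have "\<dots> \<le> ?m u * exp 16"
    proof (rule mult_left_mono)
      have "c * (t' - u) \<le> c * \<tau>" unfolding \<tau>_def using u c0 by (intro mult_left_mono) auto
      then show "exp (c * (t' - u)) \<le> exp 16" using ctau by simp
    qed (rule Gs_nonneg)
    finally show "?m t' \<le> exp 16 * ?m u" by (simp add: mult.commute)
  qed
  define IG where "IG = integral {s..t'} ?G"
  define ID where "ID = integral {s..t'} ?D"
  have iG: "(?G has_integral IG) {s..t'}" unfolding IG_def by (rule G_int[OF eta order_refl])
  have iD: "(?D has_integral ID) {s..t'}" unfolding ID_def by (rule G_int[OF eta order_refl])
  have IGb: "IG \<le> \<tau> * exp 16 * ?G s"
  proof -
    have "((\<lambda>u. exp 16 * ?G s) has_integral (exp 16 * ?G s) * (t' - s)) {s..t'}"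
      using has_integral_const_real[of "exp 16 * ?G s" s t'] st by (simp add: mult.commute)
    from has_integral_le[OF iG this] Gb show ?thesis unfolding \<tau>_def by (simp add: mult_ac)
  qed
  have IDb: "ID \<le> (1 + 16 * exp 16) * ?G s"
  proof -
    have ftc: "((\<lambda>u. dGe M (-2*\<theta>) (Y u) (\<eta> u)) has_integral (?G t' - ?G s)) {s..t'}"
    proof (rule fundamental_theorem_of_calculus)
      show "s \<le> t'" using st by simp
      fix u assume "u \<in> {s..t'}"
      then show "(?G has_vector_derivative dGe M (-2*\<theta>) (Y u) (\<eta> u)) (at u within {s..t'})"
        unfolding has_real_derivative_iff_has_vector_derivative[symmetric]
        by (rule G_deriv_sub[OF eta order_refl])
    qed
    have "?G t' - ?G s \<le> - ID + c * IG"
      by (rule has_integral_le[OF ftc has_integral_add[OF has_integral_neg[OF iD] has_integral_mult_right[OF iG]]])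
         (use dG in simp)
    then have "ID \<le> ?G s + c * IG" using Gs_nonneg[where M=M and p="-2*\<theta>" and c="\<eta> t'"] by simp
    also have "c * IG \<le> c * (\<tau> * exp 16 * ?G s)" by (rule mult_left_mono[OF IGb c0])
    also have "c * (\<tau> * exp 16 * ?G s) \<le> 16 * exp 16 * ?G s"
    proof -
      have "0 \<le> exp 16 * ?G s" using Gs_nonneg by simp
      from mult_right_mono[OF ctau this] show ?thesis by (simp add: mult_ac)
    qed
    finally show ?thesis by (simp add: algebra_simps)
  qed
  have interp: "\<And>u. ?m u \<le> \<tau> powr (-\<theta>) * ?G u + \<tau> powr (1-\<theta>) * ?D u"
  proof -
    fix u
    have "?m u \<le> (\<Sum>k=1..M. (\<tau> powr (-\<theta>) * (real k * pi) powr (-2*\<theta>) + \<tau> powr (1-\<theta>) * (real k * pi) powr (2-2*\<theta>)) * (\<eta> u k)^2)"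
    proof (rule sum_mono)
      fix k assume k: "k \<in> {1..M}"
      then have p: "real k * pi > 0" by auto
      have "1 \<le> \<tau> powr (-\<theta>) * (real k * pi) powr (-2*\<theta>) + \<tau> powr (1-\<theta>) * (real k * pi) powr (2-2*\<theta>)"
        by (rule interp_ineq[OF tau p th(1)]) (use th in simp)
      then show "(real k * pi) powr 0 * (\<eta> u k)^2 \<le> (\<tau> powr (-\<theta>) * (real k * pi) powr (-2*\<theta>) + \<tau> powr (1-\<theta>) * (real k * pi) powr (2-2*\<theta>)) * (\<eta> u k)^2"
        using p by (intro mult_right_mono) auto
    qed
    also have "\<dots> = \<tau> powr (-\<theta>) * ?G u + \<tau> powr (1-\<theta>) * ?D u"
      unfolding sum_distrib_left sum.distrib[symmetric] by (rule sum.cong) (simp_all add: algebra_simps)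
    finally show "?m u \<le> \<tau> powr (-\<theta>) * ?G u + \<tau> powr (1-\<theta>) * ?D u" .
  qed
  have "?m t' * \<tau> \<le> exp 16 * (\<tau> powr (-\<theta>) * IG + \<tau> powr (1-\<theta>) * ID)"
  proof -
    have c1: "((\<lambda>u. ?m t') has_integral ?m t' * \<tau>) {s..t'}"
      using has_integral_const_real[of "?m t'" s t'] st unfolding \<tau>_def by (simp add: mult.commute)
    have c2: "((\<lambda>u. exp 16 * (\<tau> powr (-\<theta>) * ?G u + \<tau> powr (1-\<theta>) * ?D u)) has_integral
              exp 16 * (\<tau> powr (-\<theta>) * IG + \<tau> powr (1-\<theta>) * ID)) {s..t'}"
      by (intro has_integral_mult_right has_integral_add iG iD)
    show ?thesis
    proof (rule has_integral_le[OF c1 c2])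
      fix u assume u: "u \<in> {s..t'}"
      show "?m t' \<le> exp 16 * (\<tau> powr (-\<theta>) * ?G u + \<tau> powr (1-\<theta>) * ?D u)"
        using mb[OF u] interp[of u] by (smt (verit) exp_gt_zero mult_left_mono)
    qed
  qed
  also have "\<dots> \<le> exp 16 * (\<tau> powr (-\<theta>) * (\<tau> * exp 16 * ?G s) + \<tau> powr (1-\<theta>) * ((1 + 16 * exp 16) * ?G s))"
    using IGb IDb by (intro mult_left_mono add_mono) auto
  also have "\<dots> = (exp 16 * (1 + 17 * exp 16)) * \<tau> powr (-\<theta>) * ?G s * \<tau>"
  proof -
    have "\<tau> powr (1-\<theta>) = \<tau> powr (-\<theta>) * \<tau>"
    proof -
      have "\<tau> powr (1-\<theta>) = \<tau> powr (1 + (-\<theta>))" by simp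
      also have "\<dots> = \<tau> powr 1 * \<tau> powr (-\<theta>)" by (rule powr_add)
      finally show ?thesis using tau by simp
    qed
    then show ?thesis by (simp add: algebra_simps)
  qed
  finally show ?thesis unfolding \<tau>_def[symmetric] using tau by simp
qed

lemma long_time:
  assumes eta: "is_eta M Y s h \<eta>" and ep: "\<epsilon> > 0" and sr: "s \<le> r" and rt: "r \<le> t"
    and cY: "continuous_on {r..t} (\<lambda>u. Gs M 2 (Y u))"
  shows "Gs M 0 (\<eta> t) \<le> Gs M 0 (\<eta> r) * exp (integral {r..t} (\<lambda>u. 2*\<epsilon> * Gs M 2 (Y u) + 1/(8*\<epsilon>^2)))"
proof (rule gronwall[OF rt G_deriv_sub[OF eta sr]])
  fix u assume "u \<in> {r..t}"
  show "dGe M 0 (Y u) (\<eta> u) \<le> (2*\<epsilon> * Gs M 2 (Y u) + 1/(8*\<epsilon>^2)) * Gs M 0 (\<eta> u)"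
    by (rule dGe_fine[OF ep])
next
  show "continuous_on {r..t} (\<lambda>u. 2*\<epsilon> * Gs M 2 (Y u) + 1/(8*\<epsilon>^2))"
    by (intro continuous_intros cY)
qed

definition Kc :: real where "Kc = exp 16 * (1 + 17 * exp 16)"

definition Cc :: "real \<Rightarrow> real \<Rightarrow> real \<Rightarrow> real" where
  "Cc T \<alpha> \<epsilon> = sqrt Kc * exp (T / (16 * \<epsilon>^2)) * (1 + T powr \<alpha>)"

lemma Kc_pos: "Kc > 0" unfolding Kc_def by (simp add: add_pos_pos)

lemma Cc_pos: "Cc T \<alpha> \<epsilon> > 0"
  unfolding Cc_def using Kc_pos by (simp add: add_pos_nonneg)

lemma sqrt_bound:
  fixes m G R :: real
  assumes "0 \<le> m" "0 < G" "0 \<le> R" "m \<le> R^2 * G"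
  shows "sqrt m / sqrt G \<le> R"
proof -
  have "sqrt m \<le> sqrt (R^2 * G)" using assms(4) by (rule real_sqrt_le_mono)
  also have "\<dots> = R * sqrt G" using assms(3) by (simp add: real_sqrt_mult)
  finally show ?thesis using assms(2) by (simp add: divide_le_eq)
qed

lemma pathwise:
  assumes T: "T > 0" and al: "0 \<le> \<alpha>" "\<alpha> < 1/2" and ep: "\<epsilon> > 0"
    and cY: "\<And>k. continuous_on {0..} (\<lambda>t. Y t k)"
    and hM: "in_HM M h" and hne: "h \<noteq> (\<lambda>_. 0)"
    and st: "0 \<le> s" "s < t" "t \<le> T" and eta: "is_eta M Y s h \<eta>"
  shows "L2_norm (fn M (\<eta> t)) / L2_norm (fn M (negA_pow \<alpha> h))
         \<le> Cc T \<alpha> \<epsilon> / (t - s) powr \<alpha>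
            * exp (\<epsilon> * integral {s..t} (\<lambda>r. L2_norm (deriv (fn M (Y r))) ^ 2))
            * ((SUP r\<in>{s..t}. Linf_norm (fn M (Y r))) + 1)"
proof -
  define \<theta> where "\<theta> = 2 * \<alpha>"
  have th: "0 \<le> \<theta>" "\<theta> < 1" unfolding \<theta>_def using al by auto
  define \<tau> where "\<tau> = t - s"
  have tau: "\<tau> > 0" "\<tau> \<le> T" unfolding \<tau>_def using st by auto
  define L where "L r = Linf_norm (fn M (Y r))" for r
  define S0 where "S0 = (SUP r\<in>{s..t}. L r)"
  define S where "S = S0 + 1"
  have cYs: "\<And>k. continuous_on {s..t} (\<lambda>r. Y r k)"
    using st by (intro continuous_on_subset[OF cY]) auto
  define B where "B r = (\<Sum>k=1..M. \<bar>Y r k\<bar> * sqrt 2)" for r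
  have cB: "continuous_on {s..t} B" unfolding B_def[abs_def]
    by (intro continuous_intros cYs)
  obtain rm where rm: "rm \<in> {s..t}" "\<And>r. r \<in> {s..t} \<Longrightarrow> B r \<le> B rm"
    using continuous_attains_sup[OF compact_Icc _ cB] st by fastforce
  have LB: "\<And>r. L r \<le> B r"
  proof -
    fix r
    show "L r \<le> B r" unfolding L_def Linf_norm_def B_def
    proof (rule cSUP_least)
      show "{0<..<1::real} \<noteq> {}" by auto
    next
      fix x :: real
      show "\<bar>fn M (Y r) x\<bar> \<le> (\<Sum>k=1..M. \<bar>Y r k\<bar> * sqrt 2)" by (rule fn_bound)
    qed
  qed
  have bddL: "bdd_above (L ` {s..t})"
    by (rule bdd_aboveI2[where M="B rm"]) (use LB rm in \<open>auto intro: order_trans\<close>)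
  have LS0: "\<And>r. r \<in> {s..t} \<Longrightarrow> L r \<le> S0" unfolding S0_def by (rule cSUP_upper[OF _ bddL])
  have S0nn: "0 \<le> S0" using LS0[of s] Linf_nonneg[of M "Y s"] st unfolding L_def by force
  have S1: "S \<ge> 1" unfolding S_def using S0nn by simp
  have Sp: "S > 0" using S1 by simp
  have hS: "\<And>u \<xi>. u \<in> {s..t} \<Longrightarrow> \<xi> \<in> {0..1} \<Longrightarrow> \<bar>fn M (Y u) \<xi>\<bar> \<le> S"
  proof -
    fix u \<xi> :: real assume u: "u \<in> {s..t}" and x: "\<xi> \<in> {0..1}"
    have "\<bar>fn M (Y u) \<xi>\<bar> \<le> L u" unfolding L_def by (rule Linf_bound[OF x])
    also have "\<dots> \<le> S0" by (rule LS0[OF u])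
    finally show "\<bar>fn M (Y u) \<xi>\<bar> \<le> S" unfolding S_def by simp
  qed
  define Gh where "Gh = Gs M (-2*\<theta>) h"
  have den: "L2_norm (fn M (negA_pow \<alpha> h)) = sqrt Gh"
  proof -
    have "\<And>k. k \<in> {1..M} \<Longrightarrow> (negA_pow \<alpha> h k)^2 = (real k * pi) powr (-2*\<theta>) * (h k)^2"
    proof -
      fix k assume k: "k \<in> {1..M}"
      then have p: "real k * pi > 0" by auto
      have "((real k * pi) powr (-2*\<alpha>))^2 = (real k * pi) powr (-2*\<theta>)"
        unfolding \<theta>_def using p by (simp add: powr_powr[symmetric] powr_numeral[symmetric] power2_eq_square powr_add[symmetric])
      then show "(negA_pow \<alpha> h k)^2 = (real k * pi) powr (-2*\<theta>) * (h k)^2"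
        unfolding negA_pow_def by (simp add: power_mult_distrib mult.commute)
    qed
    then have "(\<Sum>k=1..M. (negA_pow \<alpha> h k)^2) = Gh" unfolding Gh_def by (rule sum.cong[OF refl])
    then show ?thesis unfolding L2_norm_fn by simp
  qed
  have Ghp: "Gh > 0"
  proof -
    obtain k where "h k \<noteq> 0" using hne by auto
    then have k: "k \<in> {1..M}" using hM unfolding in_HM_def by auto
    then have "0 < (real k * pi) powr (-2*\<theta>) * (h k)^2" using \<open>h k \<noteq> 0\<close> by auto
    also have "\<dots> \<le> Gh" unfolding Gh_def
      by (rule member_le_sum[where f="\<lambda>k. (real k * pi) powr (-2*\<theta>) * (h k)^2", OF k]) auto
    finally show ?thesis .
  qed
  have num: "L2_norm (fn M (\<eta> t)) = sqrt (Gs M 0 (\<eta> t))" unfolding L2_norm_fn Gs0 ..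
  have etas: "\<eta> s = h" using eta unfolding is_eta_def by simp
  define P where "P r = Gs M 2 (Y r)" for r
  have IPeq: "(\<lambda>r. L2_norm (deriv (fn M (Y r))) ^ 2) = P"
    unfolding P_def L2_norm_dfn Gs2 ..
  define IP where "IP = integral {s..t} P"
  have cP: "continuous_on {s..t} P" unfolding P_def[abs_def] by (intro continuous_intros cYs)
  have Pnn: "\<And>r. 0 \<le> P r" unfolding P_def by (rule Gs_nonneg)
  have IPnn: "0 \<le> IP" unfolding IP_def
    using cP Pnn by (intro integral_nonneg integrable_continuous_interval) auto
  define Rhs where "Rhs = Cc T \<alpha> \<epsilon> / \<tau> powr \<alpha> * exp (\<epsilon> * IP) * (S0 + 1)"
  have goal: "sqrt (Gs M 0 (\<eta> t)) / sqrt Gh \<le> Rhs"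
  proof (cases "\<tau> * S^2 \<le> 1")
    case True
    have "Gs M 0 (\<eta> t) \<le> Kc * \<tau> powr (-\<theta>) * Gh"
      using short_time[OF eta th Sp hS st(2)] True etas unfolding Kc_def Gh_def \<tau>_def by simp
    also have "Kc * \<tau> powr (-\<theta>) = (sqrt Kc * \<tau> powr (-\<alpha>))^2"
    proof -
      have "\<tau> powr (-\<theta>) = \<tau> powr (-\<alpha> + -\<alpha>)" unfolding \<theta>_def by simp
      also have "\<dots> = \<tau> powr (-\<alpha>) * \<tau> powr (-\<alpha>)" by (rule powr_add)
      finally have "\<tau> powr (-\<theta>) = \<tau> powr (-\<alpha>) * \<tau> powr (-\<alpha>)" .
      moreover have "sqrt Kc * sqrt Kc = Kc" using Kc_pos by simp
      ultimately show ?thesis by (simp add: power2_eq_square mult_ac)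
    qed
    finally have "sqrt (Gs M 0 (\<eta> t)) / sqrt Gh \<le> sqrt Kc * \<tau> powr (-\<alpha>)"
      by (intro sqrt_bound Gs_nonneg Ghp) (use Kc_pos in auto)
    also have "\<dots> \<le> Rhs"
    proof -
      have "sqrt Kc \<le> Cc T \<alpha> \<epsilon>"
      proof -
        have e1: "1 \<le> exp (T / (16 * \<epsilon>^2))" using T ep by simp
        have e2: "1 \<le> 1 + T powr \<alpha>" by simp
        have "1 * 1 \<le> exp (T / (16 * \<epsilon>^2)) * (1 + T powr \<alpha>)"
          by (rule mult_mono[OF e1 e2]) auto
        then have "sqrt Kc * 1 \<le> sqrt Kc * (exp (T / (16 * \<epsilon>^2)) * (1 + T powr \<alpha>))"
          using Kc_pos by (intro mult_left_mono) auto
        then show ?thesis unfolding Cc_def by (simp add: mult.assoc)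
      qed
      then have f1: "sqrt Kc * \<tau> powr (-\<alpha>) \<le> Cc T \<alpha> \<epsilon> / \<tau> powr \<alpha>"
        using tau by (simp add: powr_minus divide_inverse mult_right_mono)
      have f2: "1 \<le> exp (\<epsilon> * IP)" using ep IPnn by simp
      have f3: "1 \<le> S0 + 1" using S0nn by simp
      have f4: "0 \<le> Cc T \<alpha> \<epsilon> / \<tau> powr \<alpha>" using Cc_pos[of T \<alpha> \<epsilon>] tau by simp
      have f5: "0 \<le> Cc T \<alpha> \<epsilon> / \<tau> powr \<alpha> * exp (\<epsilon> * IP)" using f4 by (intro mult_nonneg_nonneg) auto
      have "sqrt Kc * \<tau> powr (-\<alpha>) * 1 * 1 \<le> Cc T \<alpha> \<epsilon> / \<tau> powr \<alpha> * exp (\<epsilon> * IP) * (S0 + 1)"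
        by (rule mult_mono[OF mult_mono[OF f1 f2 f4 zero_le_one] f3 f5 zero_le_one])
      then show ?thesis unfolding Rhs_def by simp
    qed
    finally show ?thesis .
  next
    case False
    define \<delta> where "\<delta> = 1 / S^2"
    define t1 where "t1 = s + \<delta>"
    have dp: "\<delta> > 0" unfolding \<delta>_def using Sp by simp
    have t1t: "t1 < t" unfolding t1_def \<delta>_def \<tau>_def using False Sp
      by (simp add: \<tau>_def field_simps)
    have st1: "s < t1" unfolding t1_def using dp by simp
    have hS1: "\<And>u \<xi>. u \<in> {s..t1} \<Longrightarrow> \<xi> \<in> {0..1} \<Longrightarrow> \<bar>fn M (Y u) \<xi>\<bar> \<le> S"
      using hS t1t by auto
    have sm: "(t1 - s) * S^2 \<le> 1" unfolding t1_def \<delta>_def using Sp by simp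
    have A: "Gs M 0 (\<eta> t1) \<le> Kc * \<delta> powr (-\<theta>) * Gh"
      using short_time[OF eta th Sp hS1 st1 sm] etas unfolding Kc_def Gh_def t1_def by simp
    have dS: "\<delta> powr (-\<theta>) \<le> S^2"
    proof -
      have "\<delta> powr (-\<theta>) = (S^2) powr \<theta>" unfolding \<delta>_def using Sp by (simp add: powr_minus_divide powr_divide)
      also have "\<dots> \<le> (S^2) powr 1" using th S1 by (intro powr_mono) (auto simp: one_le_power)
      finally show ?thesis using Sp by simp
    qed
    have cP1: "continuous_on {t1..t} (\<lambda>u. Gs M 2 (Y u))"
      using continuous_on_subset[OF cP, of "{t1..t}"] st1 unfolding P_def[abs_def] by auto
    have Bl: "Gs M 0 (\<eta> t) \<le> Gs M 0 (\<eta> t1) * exp (integral {t1..t} (\<lambda>u. 2*\<epsilon> * Gs M 2 (Y u) + 1/(8*\<epsilon>^2)))"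
      by (rule long_time[OF eta ep _ _ cP1]) (use st1 t1t in auto)
    have I1: "integral {t1..t} (\<lambda>u. 2*\<epsilon> * Gs M 2 (Y u) + 1/(8*\<epsilon>^2)) \<le> 2*\<epsilon> * IP + T/(8*\<epsilon>^2)"
    proof -
      have iP1: "(P has_integral integral {t1..t} P) {t1..t}"
        using cP1 unfolding P_def[abs_def] by (intro integrable_integral integrable_continuous_interval)
      have "((\<lambda>u. 2*\<epsilon> * P u + 1/(8*\<epsilon>^2)) has_integral (2*\<epsilon> * integral {t1..t} P + (1/(8*\<epsilon>^2)) * (t - t1))) {t1..t}"
        using has_integral_add[OF has_integral_mult_right[OF iP1, of "2*\<epsilon>"] has_integral_const_real[of "1/(8*\<epsilon>^2)" t1 t]] t1t
        by (simp add: mult.commute)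
      then have e: "integral {t1..t} (\<lambda>u. 2*\<epsilon> * Gs M 2 (Y u) + 1/(8*\<epsilon>^2)) = 2*\<epsilon> * integral {t1..t} P + (1/(8*\<epsilon>^2)) * (t - t1)"
        unfolding P_def by (rule integral_unique)
      have "integral {t1..t} P \<le> IP" unfolding IP_def
        by (rule integral_subset_le) (use st1 cP cP1 Pnn in \<open>auto intro!: integrable_continuous_interval simp: P_def[abs_def]\<close>)
      moreover have "(1/(8*\<epsilon>^2)) * (t - t1) \<le> (1/(8*\<epsilon>^2)) * T"
        using st1 st ep by (intro mult_left_mono) auto
      moreover have "2 * \<epsilon> * integral {t1..t} P \<le> 2 * \<epsilon> * IP"
        using calculation(1) ep by simp
      ultimately show ?thesis unfolding e by simp
    qed
    have "Gs M 0 (\<eta> t) \<le> Kc * S^2 * Gh * exp (2*\<epsilon> * IP + T/(8*\<epsilon>^2))"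
    proof -
      have "Gs M 0 (\<eta> t) \<le> Gs M 0 (\<eta> t1) * exp (2*\<epsilon> * IP + T/(8*\<epsilon>^2))"
      proof -
        have "exp (integral {t1..t} (\<lambda>u. 2*\<epsilon> * Gs M 2 (Y u) + 1/(8*\<epsilon>^2))) \<le> exp (2*\<epsilon> * IP + T/(8*\<epsilon>^2))"
          using I1 by simp
        then have "Gs M 0 (\<eta> t1) * exp (integral {t1..t} (\<lambda>u. 2*\<epsilon> * Gs M 2 (Y u) + 1/(8*\<epsilon>^2)))
             \<le> Gs M 0 (\<eta> t1) * exp (2*\<epsilon> * IP + T/(8*\<epsilon>^2))"
          by (rule mult_left_mono) (rule Gs_nonneg)
        then show ?thesis using Bl by linarith
      qed
      also have "\<dots> \<le> (Kc * S^2 * Gh) * exp (2*\<epsilon> * IP + T/(8*\<epsilon>^2))"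
      proof (rule mult_right_mono)
        have "Kc * \<delta> powr (-\<theta>) * Gh \<le> Kc * S^2 * Gh"
          using dS Kc_pos Ghp by (intro mult_right_mono mult_left_mono) auto
        then show "Gs M 0 (\<eta> t1) \<le> Kc * S^2 * Gh" using A by linarith
      qed simp
      finally show ?thesis .
    qed
    also have "Kc * S^2 * Gh * exp (2*\<epsilon> * IP + T/(8*\<epsilon>^2)) = (sqrt Kc * S * exp (\<epsilon> * IP + T/(16*\<epsilon>^2)))^2 * Gh"
    proof -
      have "(exp (\<epsilon> * IP + T/(16*\<epsilon>^2)))^2 = exp (2*\<epsilon> * IP + T/(8*\<epsilon>^2))"
        by (simp add: exp_double[symmetric] power2_eq_square exp_add[symmetric] field_simps)
      then show ?thesis using Kc_pos by (simp add: power_mult_distrib)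
    qed
    finally have "sqrt (Gs M 0 (\<eta> t)) / sqrt Gh \<le> sqrt Kc * S * exp (\<epsilon> * IP + T/(16*\<epsilon>^2))"
      by (intro sqrt_bound Gs_nonneg Ghp) (use Sp Kc_pos in auto)
    also have "\<dots> = (sqrt Kc * exp (T/(16*\<epsilon>^2))) * exp (\<epsilon> * IP) * (S0 + 1)"
      unfolding S_def by (simp add: exp_add mult_ac)
    also have "\<dots> \<le> Rhs"
    proof -
      have "\<tau> powr \<alpha> \<le> T powr \<alpha>" using tau al by (intro powr_mono2) auto
      have tp: "\<tau> powr \<alpha> > 0" using tau by simp
      have "sqrt Kc * exp (T/(16*\<epsilon>^2)) \<le> Cc T \<alpha> \<epsilon> / \<tau> powr \<alpha>"
      proof -
        have "sqrt Kc * exp (T/(16*\<epsilon>^2)) * \<tau> powr \<alpha> \<le> sqrt Kc * exp (T/(16*\<epsilon>^2)) * (1 + T powr \<alpha>)"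
          using \<open>\<tau> powr \<alpha> \<le> T powr \<alpha>\<close> Kc_pos by (intro mult_left_mono) auto
        then show ?thesis unfolding Cc_def using tp by (simp add: le_divide_eq)
      qed
      moreover have "0 \<le> exp (\<epsilon> * IP) * (S0 + 1)" using S0nn by simp
      ultimately show ?thesis unfolding Rhs_def by (metis mult.assoc mult_right_mono)
    qed
    finally show ?thesis .
  qed
  show ?thesis using goal unfolding num den IPeq Rhs_def IP_def \<tau>_def S0_def L_def .
qed

theorem lemma4p2:
  fixes T \<alpha> \<epsilon> :: real
    and P :: "'a measure"
    and q :: "nat \<Rightarrow> real" and e :: "nat \<Rightarrow> real \<Rightarrow> real"
    and W :: "nat \<Rightarrow> real \<Rightarrow> 'a \<Rightarrow> real"
  assumes "0 < T"
    and "0 \<le> \<alpha>" and "\<alpha> < 1/2" and "0 < \<epsilon>"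
    and "L2_ONB e" and "\<forall>k. 0 \<le> q k" and "summable q"
    and "indep_BMs P W"
  shows "\<exists>C>0. \<forall>M x X h s t.
           in_HM M x \<and> is_XM P M x q e W X \<and> in_HM M h \<and> h \<noteq> (\<lambda>_. 0)
           \<and> 0 \<le> s \<and> s < t \<and> t \<le> T \<longrightarrow>
           (AE \<omega> in P. \<forall>\<eta>. is_eta M (\<lambda>r. X r \<omega>) s h \<eta> \<longrightarrow>
              L2_norm (fn M (\<eta> t)) / L2_norm (fn M (negA_pow \<alpha> h))
              \<le> C / (t - s) powr \<alpha>
                 * exp (\<epsilon> * integral {s..t} (\<lambda>r. L2_norm (deriv (fn M (X r \<omega>))) ^ 2))
                 * ((SUP r\<in>{s..t}. Linf_norm (fn M (X r \<omega>))) + 1))"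
  proof (intro exI[of _ "Cc T \<alpha> \<epsilon>"] conjI allI impI)
  show "Cc T \<alpha> \<epsilon> > 0" by (rule Cc_pos)
next
  fix M x X h s t
  assume H: "in_HM M x \<and> is_XM P M x q e W X \<and> in_HM M h \<and> h \<noteq> (\<lambda>_. 0) \<and> 0 \<le> s \<and> s < t \<and> t \<le> T"
  show "AE \<omega> in P. \<forall>\<eta>. is_eta M (\<lambda>r. X r \<omega>) s h \<eta> \<longrightarrow>
              L2_norm (fn M (\<eta> t)) / L2_norm (fn M (negA_pow \<alpha> h))
              \<le> Cc T \<alpha> \<epsilon> / (t - s) powr \<alpha>
                 * exp (\<epsilon> * integral {s..t} (\<lambda>r. L2_norm (deriv (fn M (X r \<omega>))) ^ 2))
                 * ((SUP r\<in>{s..t}. Linf_norm (fn M (X r \<omega>))) + 1)"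
  proof (rule AE_I2, intro allI impI)
    fix \<omega> \<eta> assume \<omega>: "\<omega> \<in> space P" and eta: "is_eta M (\<lambda>r. X r \<omega>) s h \<eta>"
    have cY: "\<And>k. continuous_on {0..} (\<lambda>t. X t \<omega> k)"
      using H \<omega> unfolding is_XM_def by blast
    show "L2_norm (fn M (\<eta> t)) / L2_norm (fn M (negA_pow \<alpha> h))
              \<le> Cc T \<alpha> \<epsilon> / (t - s) powr \<alpha>
                 * exp (\<epsilon> * integral {s..t} (\<lambda>r. L2_norm (deriv (fn M (X r \<omega>))) ^ 2))
                 * ((SUP r\<in>{s..t}. Linf_norm (fn M (X r \<omega>))) + 1)"
      using pathwise[where Y="\<lambda>r. X r \<omega>", OF assms(1-4) cY _ _ _ _ _ eta] H by blast
  qed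
qed

end
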